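(* Let $T>0$ and let $\alpha,\beta:\mathbb{R}\to\mathbb{R}$ be continuous $T$-periodic functions such that $\alpha=0$ on $[\tfrac T2,T]$, $\beta=0$ on $[0,\tfrac T2]$, $\alpha(t)>0$ for $t\in(0,\tfrac T2)$ and $\beta(t)>0$ for $t\in(\tfrac T2,T)$. Set $A:=\int_0^T\alpha(t)\,dt$ and $B:=\int_0^T\beta(t)\,dt$, and suppose $AB>4$. Then the system \[ u'=\alpha(t)\,u(1-v),\qquad v'=\beta(t)\,v(-1+u) \] possesses exactly two $2T$-periodic coexistence states with minimal period $2T$.
   Context: A coexistence state is a solution $(u,v)$ defined on $\mathbb{R}$ with $u(t)>0$ and $v(t)>0$ for all $t$. The constant solution $(u,v)=(1,1)$ is the unique $T$-periodic coexistence state. *)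

theory Defs
  imports "HOL-Analysis.Analysis"
begin

definition lv_solution ::
  "(real \<Rightarrow> real) \<Rightarrow> (real \<Rightarrow> real) \<Rightarrow> (real \<Rightarrow> real) \<Rightarrow> (real \<Rightarrow> real) \<Rightarrow> bool" where
  "lv_solution \<alpha> \<beta> u v \<longleftrightarrow>
     (\<forall>t. (u has_real_derivative \<alpha> t * u t * (1 - v t)) (at t) \<and>
          (v has_real_derivative \<beta> t * v t * (-1 + u t)) (at t))"

definition coexistence_state :: "(real \<Rightarrow> real) \<Rightarrow> (real \<Rightarrow> real) \<Rightarrow> bool" where
  "coexistence_state u v \<longleftrightarrow> (\<forall>t. u t > 0 \<and> v t > 0)"

definition periodic_pair :: "real \<Rightarrow> (real \<Rightarrow> real) \<Rightarrow> (real \<Rightarrow> real) \<Rightarrow> bool" where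
  "periodic_pair p u v \<longleftrightarrow> (\<forall>t. u (t + p) = u t \<and> v (t + p) = v t)"

definition minimal_period :: "real \<Rightarrow> (real \<Rightarrow> real) \<Rightarrow> (real \<Rightarrow> real) \<Rightarrow> bool" where
  "minimal_period p u v \<longleftrightarrow> p > 0 \<and> periodic_pair p u v \<and>
     (\<forall>q. 0 < q \<and> q < p \<longrightarrow> \<not> periodic_pair q u v)"

end

theory Submission
  imports Defs
begin

lemma sinh_gt_self:
  fixes x :: real assumes "x > 0" shows "x < sinh x"
proof -
  have "(\<lambda>z. sinh z - z) 0 < (\<lambda>z. sinh z - z) x"
  proof (rule DERIV_pos_imp_increasing_open[OF assms])
    fix z :: real assume "0 < z" "z < x"
    have "cosh z > 1" using cosh_real_ge_1[of z] cosh_real_one_iff[of z] \<open>0 < z\<close> by linarith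
    then show "\<exists>y. ((\<lambda>z. sinh z - z) has_real_derivative y) (at z) \<and> y > 0"
      by (intro exI[of _ "cosh z - 1"]) (auto intro!: derivative_eq_intros)
  next
    show "continuous_on {0..x} (\<lambda>z. sinh z - z)"
      by (intro continuous_intros)
  qed
  then show ?thesis by simp
qed

lemma tanh_div_decr:
  fixes x y :: real assumes "0 < x" "x < y" shows "x * tanh y < y * tanh x"
proof -
  have "(\<lambda>z. tanh z / z) y < (\<lambda>z. tanh z / z) x"
  proof (rule DERIV_neg_imp_decreasing[OF assms(2)])
    fix z :: real assume z: "x \<le> z" "z \<le> y"
    hence zp: "z > 0" using assms by linarith
    have d: "((\<lambda>z. tanh z / z) has_real_derivative ((1 - tanh z ^ 2) * z - tanh z) / z^2) (at z)"
      using zp by (auto intro!: derivative_eq_intros simp: power2_eq_square field_simps)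
    have c: "cosh z > 0" by simp
    have s: "z < sinh z" using sinh_gt_self zp by blast
    have "sinh z \<le> sinh z * cosh z" using cosh_real_ge_1[of z] zp
      by (simp add: mult_le_cancel_left1)
    hence "z < sinh z * cosh z" using s by linarith
    hence "z / (cosh z)^2 < sinh z / cosh z" using c
      by (simp add: field_simps power2_eq_square)
    moreover have "1 - tanh z ^ 2 = ((cosh z)^2 - (sinh z)^2) / (cosh z)^2"
      using c by (simp add: tanh_def power_divide field_simps)
    hence "1 - tanh z ^ 2 = 1 / (cosh z)^2" by (simp add: hyperbolic_pythagoras)
    ultimately have "(1 - tanh z ^ 2) * z - tanh z < 0" by (simp add: tanh_def)
    hence "((1 - tanh z ^ 2) * z - tanh z) / z^2 < 0" using zp by (simp add: divide_neg_pos)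
    thus "\<exists>d. ((\<lambda>z. tanh z / z) has_real_derivative d) (at z) \<and> d < 0" using d by blast
  qed
  then show ?thesis using assms by (simp add: field_simps)
qed

lemma fp_exists:
  fixes A B :: real assumes A: "A > 0" and B: "B > 0" and AB: "A * B > 4"
  shows "\<exists>\<sigma>>0. 2 * \<sigma> = A * tanh (B / 2 * tanh \<sigma>)"
proof -
  define f where "f = (\<lambda>\<sigma>::real. A / 2 * tanh (B / 2 * tanh \<sigma>) - \<sigma>)"
  have d: "(f has_real_derivative A / 2 * B / 2 - 1) (at 0)"
    unfolding f_def by (auto intro!: derivative_eq_intros)
  have "A / 2 * B / 2 - 1 > 0" using AB by simp
  from DERIV_pos_inc_right[OF d this] obtain d where dp: "d > 0" and
    dd: "\<And>h. h > 0 \<Longrightarrow> h < d \<Longrightarrow> f 0 < f (0 + h)" by blast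
  define h where "h = d / 2"
  have hp: "h > 0" "h < d" using dp by (auto simp: h_def)
  have f0: "f 0 = 0" by (simp add: f_def)
  have fh: "f h > 0" using dd[OF hp] f0 by simp
  have lt: "A / 2 * tanh y < A / 2" for y using tanh_real_lt_1[of y] A by simp
  have hle: "h \<le> A / 2"
  proof (rule ccontr)
    assume "\<not> h \<le> A / 2"
    hence "f h < 0" using lt[of "B / 2 * tanh h"] by (simp add: f_def)
    thus False using fh by simp
  qed
  have fA: "f (A / 2) \<le> 0" using lt[of "B / 2 * tanh (A/2)"] by (simp add: f_def)
  have cont: "continuous_on {h..A/2} f" unfolding f_def
    by (intro continuous_intros continuous_on_tanh) (auto intro!: continuous_intros)
  from IVT2'[of f "A/2" 0 h, OF fA _ hle cont] fh obtain x where
    x: "h \<le> x" "x \<le> A / 2" "f x = 0" by auto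
  hence "x > 0" using hp by simp
  moreover have "2 * x = A * tanh (B / 2 * tanh x)" using x(3) by (simp add: f_def algebra_simps)
  ultimately show ?thesis by blast
qed

definition sysE :: "real \<Rightarrow> real \<Rightarrow> real \<Rightarrow> real \<Rightarrow> bool" where
  "sysE A B \<sigma> \<rho> \<longleftrightarrow> 2 * \<sigma> = A * tanh \<rho> \<and> 2 * \<rho> = B * tanh \<sigma>"

lemma fp_unique_aux:
  fixes A B :: real assumes A: "A > 0" and B: "B > 0"
    and s1: "sysE A B \<sigma>1 \<rho>1" and s2: "sysE A B \<sigma>2 \<rho>2"
    and p: "0 < \<sigma>1" "\<sigma>1 < \<sigma>2"
  shows False
proof -
  have r1: "\<rho>1 > 0" using s1 p B unfolding sysE_def
    by (metis half_gt_zero mult_pos_pos nonzero_mult_div_cancel_left tanh_real_pos_iff zero_neq_numeral) 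
  have "tanh \<sigma>1 < tanh \<sigma>2" using p by simp
  hence "B * tanh \<sigma>1 < B * tanh \<sigma>2" using B by (rule mult_strict_left_mono)
  hence r12: "\<rho>1 < \<rho>2" using s1 s2 unfolding sysE_def by linarith
  have a: "\<sigma>1 * tanh \<sigma>2 < \<sigma>2 * tanh \<sigma>1" by (rule tanh_div_decr[OF p])
  have b: "\<rho>1 * tanh \<rho>2 < \<rho>2 * tanh \<rho>1" by (rule tanh_div_decr[OF r1 r12])
  have a': "\<sigma>1 * \<rho>2 < \<sigma>2 * \<rho>1"
  proof -
    have "\<sigma>1 * (B * tanh \<sigma>2) < \<sigma>2 * (B * tanh \<sigma>1)" using a B
      by (metis mult.left_commute mult_less_cancel_left_pos)
    moreover have "B * tanh \<sigma>2 = 2*\<rho>2" "B*tanh \<sigma>1 = 2*\<rho>1" using s1 s2 unfolding sysE_def by auto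
    ultimately show ?thesis by simp
  qed
  have b': "\<rho>1 * \<sigma>2 < \<rho>2 * \<sigma>1"
  proof -
    have "\<rho>1 * (A * tanh \<rho>2) < \<rho>2 * (A * tanh \<rho>1)" using b A
      by (metis mult.left_commute mult_less_cancel_left_pos)
    moreover have "A * tanh \<rho>2 = 2*\<sigma>2" "A*tanh \<rho>1 = 2*\<sigma>1" using s1 s2 unfolding sysE_def by auto
    ultimately show ?thesis by simp
  qed
  show False using a' b' by (simp add: algebra_simps)
qed

lemma sysE_neg: "sysE A B \<sigma> \<rho> \<Longrightarrow> sysE A B (-\<sigma>) (-\<rho>)"
  by (simp add: sysE_def)

lemma sysE_classify:
  fixes A B :: real assumes A: "A > 0" and B: "B > 0" and AB: "A * B > 4"
  obtains \<sigma>0 \<rho>0 where "\<sigma>0 > 0" "\<rho>0 > 0" "sysE A B \<sigma>0 \<rho>0"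
    "\<And>\<sigma> \<rho>. sysE A B \<sigma> \<rho> \<Longrightarrow> \<sigma> \<noteq> 0 \<Longrightarrow> (\<sigma> = \<sigma>0 \<and> \<rho> = \<rho>0) \<or> (\<sigma> = -\<sigma>0 \<and> \<rho> = -\<rho>0)"
proof -
  from fp_exists[OF A B AB] obtain \<sigma>0 where s0: "\<sigma>0 > 0" "2 * \<sigma>0 = A * tanh (B / 2 * tanh \<sigma>0)" by blast
  define \<rho>0 where "\<rho>0 = B / 2 * tanh \<sigma>0"
  have sy: "sysE A B \<sigma>0 \<rho>0" using s0 by (simp add: sysE_def \<rho>0_def)
  have r0: "\<rho>0 > 0" using s0 B by (simp add: \<rho>0_def)
  have pos: "\<sigma> = \<sigma>0 \<and> \<rho> = \<rho>0" if "sysE A B \<sigma> \<rho>" "\<sigma> > 0" for \<sigma> \<rho>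
  proof -
    have "\<sigma> = \<sigma>0"
      using fp_unique_aux[OF A B that(1) sy] fp_unique_aux[OF A B sy that(1)] that(2) s0(1)
      by (cases \<sigma> \<sigma>0 rule: linorder_cases) auto
    thus ?thesis using that(1) sy B unfolding sysE_def by simp
  qed
  show ?thesis
  proof (rule that[OF s0(1) r0 sy])
    fix \<sigma> \<rho> assume h: "sysE A B \<sigma> \<rho>" "\<sigma> \<noteq> 0"
    show "(\<sigma> = \<sigma>0 \<and> \<rho> = \<rho>0) \<or> (\<sigma> = -\<sigma>0 \<and> \<rho> = -\<rho>0)"
    proof (cases "\<sigma> > 0")
      case True thus ?thesis using pos h by blast
    next
      case False
      hence "-\<sigma> > 0" using h by simp
      from pos[OF sysE_neg[OF h(1)] this] show ?thesis by simp
    qed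
  qed
qed

lemma antideriv_UNIV:
  fixes f :: "real \<Rightarrow> real" assumes "continuous_on UNIV f"
  obtains F where "\<And>x. (F has_real_derivative f x) (at x)"
proof -
  have "\<exists>F. \<forall>x :: real. (-\<infinity>::ereal) < x \<longrightarrow> x < (\<infinity>::ereal) \<longrightarrow> (F has_vector_derivative f x) (at x)"
    by (rule einterval_antiderivative) (use assms in \<open>auto simp: continuous_on_eq_continuous_at\<close>)
  then obtain F where "\<And>x. (F has_vector_derivative f x) (at x)" by auto
  thus ?thesis using that by (auto simp: has_real_derivative_iff_has_vector_derivative)
qed

lemma periodic_int:
  fixes f :: "real \<Rightarrow> 'a" assumes "\<And>t. f (t + p) = f t"
  shows "f (t + real_of_int n * p) = f t"
proof (induction n arbitrary: t rule: int_induct[where k=0])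
  case base thus ?case by simp
next
  case (step1 i) thus ?case using assms[of "t + real_of_int i * p"] by (simp add: algebra_simps)
next
  case (step2 i)
  have "f (t + real_of_int (i - 1) * p) = f (t + real_of_int (i - 1) * p + p)" using assms by simp
  also have "\<dots> = f (t + real_of_int i * p)" by (simp add: algebra_simps)
  also have "\<dots> = f t" using step2 by simp
  finally show ?case .
qed

lemma const_on_interval:
  fixes f :: "real \<Rightarrow> real"
  assumes "\<And>x. p \<le> x \<Longrightarrow> x \<le> q \<Longrightarrow> (f has_real_derivative 0) (at x)" and "t \<in> {p..q}"
  shows "f t = f p"
proof (cases "p < t")
  case True
  show ?thesis
  proof (rule DERIV_isconst2[OF True])
    show "continuous_on {p..t} f" using assms
    proof (intro continuous_at_imp_continuous_on ballI)
      fix x assume "x \<in> {p..t}"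
      thus "isCont f x" using assms by (intro DERIV_isCont[of f 0]) auto
    qed
    show "\<And>x. p < x \<Longrightarrow> x < t \<Longrightarrow> (f has_real_derivative 0) (at x)" using assms by auto
  qed (use True in auto)
qed (use assms in auto)

lemma half_step_beta0:
  assumes sol: "lv_solution \<alpha> \<beta> u v" and pos: "\<And>t. u t > 0 \<and> v t > 0"
    and b0: "\<And>t. t \<in> {p..q} \<Longrightarrow> \<beta> t = 0"
    and Fa: "\<And>x. (Fa has_real_derivative \<alpha> x) (at x)"
    and t: "t \<in> {p..q}"
  shows "v t = v p \<and> ln (u t) = ln (u p) + (1 - v p) * (Fa t - Fa p)"
proof -
  have dv: "\<And>x. p \<le> x \<Longrightarrow> x \<le> q \<Longrightarrow> (v has_real_derivative 0) (at x)"
    using sol b0 unfolding lv_solution_def by (metis atLeastAtMost_iff mult_zero_left)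
  have vc: "\<And>x. x \<in> {p..q} \<Longrightarrow> v x = v p" using const_on_interval[OF dv] by blast
  define g where "g = (\<lambda>x. ln (u x) - (1 - v p) * Fa x)"
  have dg: "(g has_real_derivative 0) (at x)" if "p \<le> x" "x \<le> q" for x
  proof -
    have du: "(u has_real_derivative \<alpha> x * u x * (1 - v x)) (at x)" using sol unfolding lv_solution_def by blast
    have "(g has_real_derivative (\<alpha> x * u x * (1 - v x)) / u x - (1 - v p) * \<alpha> x) (at x)"
      unfolding g_def using pos[of x] by (auto intro!: derivative_eq_intros du Fa)
    moreover have "(\<alpha> x * u x * (1 - v x)) / u x - (1 - v p) * \<alpha> x = 0"
      using pos[of x] vc[of x] that by simp
    ultimately show ?thesis by simp
  qed
  have "g t = g p" using const_on_interval[OF dg t] .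
  thus ?thesis using vc[OF t] by (simp add: g_def algebra_simps)
qed

lemma half_step_alpha0:
  assumes sol: "lv_solution \<alpha> \<beta> u v" and pos: "\<And>t. u t > 0 \<and> v t > 0"
    and a0: "\<And>t. t \<in> {p..q} \<Longrightarrow> \<alpha> t = 0"
    and Fb: "\<And>x. (Fb has_real_derivative \<beta> x) (at x)"
    and t: "t \<in> {p..q}"
  shows "u t = u p \<and> ln (v t) = ln (v p) + (u p - 1) * (Fb t - Fb p)"
proof -
  have du: "\<And>x. p \<le> x \<Longrightarrow> x \<le> q \<Longrightarrow> (u has_real_derivative 0) (at x)"
    using sol a0 unfolding lv_solution_def by (metis atLeastAtMost_iff mult_zero_left)
  have uc: "\<And>x. x \<in> {p..q} \<Longrightarrow> u x = u p" using const_on_interval[OF du] by blast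
  define g where "g = (\<lambda>x. ln (v x) - (u p - 1) * Fb x)"
  have dg: "(g has_real_derivative 0) (at x)" if "p \<le> x" "x \<le> q" for x
  proof -
    have dv: "(v has_real_derivative \<beta> x * v x * (-1 + u x)) (at x)" using sol unfolding lv_solution_def by blast
    have "(g has_real_derivative (\<beta> x * v x * (-1 + u x)) / v x - (u p - 1) * \<beta> x) (at x)"
      unfolding g_def using pos[of x] by (auto intro!: derivative_eq_intros dv Fb)
    moreover have "(\<beta> x * v x * (-1 + u x)) / v x - (u p - 1) * \<beta> x = 0"
      using pos[of x] uc[of x] that by simp
    ultimately show ?thesis by simp
  qed
  have "g t = g p" using const_on_interval[OF dg t] .
  thus ?thesis using uc[OF t] by (simp add: g_def algebra_simps)
qed

locale lvs =
  fixes T :: real and \<alpha> \<beta> :: "real \<Rightarrow> real"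
  assumes T: "T > 0"
    and ca: "continuous_on UNIV \<alpha>" and cb: "continuous_on UNIV \<beta>"
    and pa: "\<forall>t. \<alpha> (t + T) = \<alpha> t" and pb: "\<forall>t. \<beta> (t + T) = \<beta> t"
    and za: "\<forall>t\<in>{T/2..T}. \<alpha> t = 0" and zb: "\<forall>t\<in>{0..T/2}. \<beta> t = 0"
    and posa: "\<forall>t\<in>{0<..<T/2}. \<alpha> t > 0" and posb: "\<forall>t\<in>{T/2<..<T}. \<beta> t > 0"
    and AB: "integral {0..T} \<alpha> * integral {0..T} \<beta> > 4"
begin

definition Fa where "Fa = (SOME F. \<forall>x. (F has_real_derivative \<alpha> x) (at x))"
definition Fb where "Fb = (SOME F. \<forall>x. (F has_real_derivative \<beta> x) (at x))"

lemma Fa: "(Fa has_real_derivative \<alpha> x) (at x)"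
proof -
  obtain F where "\<And>x. (F has_real_derivative \<alpha> x) (at x)" using antideriv_UNIV[OF ca] by blast
  hence "\<exists>F. \<forall>x. (F has_real_derivative \<alpha> x) (at x)" by blast
  from someI_ex[OF this] show ?thesis unfolding Fa_def by blast
qed

lemma Fb: "(Fb has_real_derivative \<beta> x) (at x)"
proof -
  obtain F where "\<And>x. (F has_real_derivative \<beta> x) (at x)" using antideriv_UNIV[OF cb] by blast
  hence "\<exists>F. \<forall>x. (F has_real_derivative \<beta> x) (at x)" by blast
  from someI_ex[OF this] show ?thesis unfolding Fb_def by blast
qed

definition "A = Fa T - Fa 0"
definition "B = Fb T - Fb 0"

lemma int_FTC:
  assumes "\<And>x. (F has_real_derivative f x) (at x)" "a \<le> b"
  shows "integral {a..b} f = F b - F a"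
proof -
  have "(f has_integral (F b - F a)) {a..b}"
    by (rule fundamental_theorem_of_calculus[OF assms(2)])
       (use assms(1) in \<open>auto simp: has_real_derivative_iff_has_vector_derivative[symmetric] intro: has_field_derivative_at_within\<close>)
  thus ?thesis by (rule integral_unique)
qed

lemma A_int: "integral {0..T} \<alpha> = A" unfolding A_def using int_FTC[OF Fa] T by simp
lemma B_int: "integral {0..T} \<beta> = B" unfolding B_def using int_FTC[OF Fb] T by simp

lemma a_nonneg: "t \<in> {0..T} \<Longrightarrow> \<alpha> t \<ge> 0"
proof -
  assume t: "t \<in> {0..T}"
  show "\<alpha> t \<ge> 0"
  proof (cases "t \<in> {0<..<T/2}")
    case True hence "\<alpha> t > 0" using posa by blast
    thus ?thesis by simp
  next
    case False
    hence "t = 0 \<or> t \<in> {T/2..T}" using t by auto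
    moreover have "\<alpha> 0 = 0"
    proof -
      have "T \<in> {T/2..T}" using T by simp
      hence "\<alpha> T = 0" using za by blast
      moreover have "\<alpha> (0 + T) = \<alpha> 0" using pa by blast
      ultimately show ?thesis by simp
    qed
    ultimately show ?thesis using za by auto
  qed
qed

lemma b_nonneg: "t \<in> {0..T} \<Longrightarrow> \<beta> t \<ge> 0"
proof -
  assume t: "t \<in> {0..T}"
  show "\<beta> t \<ge> 0"
  proof (cases "t \<in> {T/2<..<T}")
    case True hence "\<beta> t > 0" using posb by blast
    thus ?thesis by simp
  next
    case False
    hence "t = T \<or> t \<in> {0..T/2}" using t by auto
    moreover have "\<beta> T = 0"
    proof -
      have "0 \<in> {0..T/2}" using T by simp
      hence "\<beta> 0 = 0" using zb by blast
      moreover have "\<beta> (0 + T) = \<beta> 0" using pb by blast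
      ultimately show ?thesis by simp
    qed
    ultimately show ?thesis using zb by auto
  qed
qed

lemma A_pos: "A > 0" and B_pos: "B > 0" and AB4: "A * B > 4"
proof -
  have "integral {0..T} \<alpha> \<ge> 0"
    by (rule integral_nonneg) (auto intro!: integrable_continuous_interval continuous_on_subset[OF ca] a_nonneg)
  moreover have "integral {0..T} \<beta> \<ge> 0"
    by (rule integral_nonneg) (auto intro!: integrable_continuous_interval continuous_on_subset[OF cb] b_nonneg)
  ultimately have "A \<ge> 0" "B \<ge> 0" "A * B > 4" using AB A_int B_int by auto
  thus "A > 0" "B > 0" "A * B > 4" by (auto simp: less_eq_real_def)
qed

lemma shift_const:
  assumes "\<And>x. (F has_real_derivative f x) (at x)" "\<And>t. f (t + p) = f t"
  shows "F (t + p) - F t = F p - F 0"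
proof -
  have "\<forall>x. ((\<lambda>t. F (t + p) - F t) has_real_derivative 0) (at x)"
  proof
    fix x
    have d1: "((\<lambda>t. F (t + p)) has_real_derivative f (x + p)) (at x)"
      using assms(1)[of "x+p"] DERIV_shift[of F "f (x + p)" x p] by simp
    have "((\<lambda>t. F (t + p) - F t) has_real_derivative f (x + p) - f x) (at x)"
      by (rule DERIV_diff[OF d1 assms(1)])
    thus "((\<lambda>t. F (t + p) - F t) has_real_derivative 0) (at x)" using assms(2) by simp
  qed
  from DERIV_isconst_all[OF this] show ?thesis by (metis add_0)
qed

lemma Fa_shift: "Fa (t + T) - Fa t = A" using shift_const[OF Fa] pa unfolding A_def by auto
lemma Fb_shift: "Fb (t + T) - Fb t = B" using shift_const[OF Fb] pb unfolding B_def by auto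

lemma Fa_half: "Fa (T/2) = Fa T"
proof -
  have "\<And>x. T/2 \<le> x \<Longrightarrow> x \<le> T \<Longrightarrow> (Fa has_real_derivative 0) (at x)" using Fa za by (metis atLeastAtMost_iff)
  from const_on_interval[of "T/2" T Fa T, OF this] T show ?thesis by simp
qed
lemma Fb_half: "Fb (T/2) = Fb 0"
proof -
  have "\<And>x. 0 \<le> x \<Longrightarrow> x \<le> T/2 \<Longrightarrow> (Fb has_real_derivative 0) (at x)" using Fb zb by (metis atLeastAtMost_iff)
  from const_on_interval[of 0 "T/2" Fb "T/2", OF this] T show ?thesis by simp
qed

lemma a_per: "\<alpha> (t + real_of_int n * T) = \<alpha> t" using periodic_int[of \<alpha> T] pa by blast
lemma b_per: "\<beta> (t + real_of_int n * T) = \<beta> t" using periodic_int[of \<beta> T] pb by blast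

lemma za2: assumes "t \<in> {3*T/2..2*T}" shows "\<alpha> t = 0"
proof -
  have "t - T \<in> {T/2..T}" using assms by simp
  hence "\<alpha> (t - T) = 0" using za by blast
  moreover have "\<alpha> (t - T + T) = \<alpha> (t - T)" using pa by blast
  ultimately show ?thesis by simp
qed
lemma zb2: assumes "t \<in> {T..3*T/2}" shows "\<beta> t = 0"
proof -
  have "t - T \<in> {0..T/2}" using assms by simp
  hence "\<beta> (t - T) = 0" using zb by blast
  moreover have "\<beta> (t - T + T) = \<beta> (t - T)" using pb by blast
  ultimately show ?thesis by simp
qed

end

lemma agree_b0:
  assumes s1: "lv_solution \<alpha> \<beta> u1 v1" and p1: "\<And>t. u1 t > 0 \<and> v1 t > 0"
    and s2: "lv_solution \<alpha> \<beta> u2 v2" and p2: "\<And>t. u2 t > 0 \<and> v2 t > 0"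
    and b0: "\<And>t. t \<in> {p..q} \<Longrightarrow> \<beta> t = 0"
    and Fa: "\<And>x. (Fa has_real_derivative \<alpha> x) (at x)"
    and e: "u1 p = u2 p" "v1 p = v2 p" and t: "t \<in> {p..q}"
  shows "u1 t = u2 t \<and> v1 t = v2 t"
proof -
  note h1 = half_step_beta0[OF s1 p1 b0 Fa t]
  note h2 = half_step_beta0[OF s2 p2 b0 Fa t]
  have "ln (u1 t) = ln (u2 t)" using h1 h2 e by simp
  hence "u1 t = u2 t" using p1[of t] p2[of t] by simp
  thus ?thesis using h1 h2 e by simp
qed

lemma agree_a0:
  assumes s1: "lv_solution \<alpha> \<beta> u1 v1" and p1: "\<And>t. u1 t > 0 \<and> v1 t > 0"
    and s2: "lv_solution \<alpha> \<beta> u2 v2" and p2: "\<And>t. u2 t > 0 \<and> v2 t > 0"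
    and a0: "\<And>t. t \<in> {p..q} \<Longrightarrow> \<alpha> t = 0"
    and Fb: "\<And>x. (Fb has_real_derivative \<beta> x) (at x)"
    and e: "u1 p = u2 p" "v1 p = v2 p" and t: "t \<in> {p..q}"
  shows "u1 t = u2 t \<and> v1 t = v2 t"
proof -
  note h1 = half_step_alpha0[OF s1 p1 a0 Fb t]
  note h2 = half_step_alpha0[OF s2 p2 a0 Fb t]
  have "ln (v1 t) = ln (v2 t)" using h1 h2 e by simp
  hence "v1 t = v2 t" using p1[of t] p2[of t] by simp
  thus ?thesis using h1 h2 e by simp
qed

lemma periodic_reduce:
  fixes p t :: real assumes p: "p > 0"
  obtains t' n where "t' \<in> {0..<p}" "t = t' + real_of_int n * p"
proof -
  define n where "n = \<lfloor>t / p\<rfloor>"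
  define t' where "t' = t - real_of_int n * p"
  have "real_of_int n \<le> t / p" "t / p < real_of_int n + 1" unfolding n_def by linarith+
  hence "real_of_int n * p \<le> t" "t < (real_of_int n + 1) * p" using p by (simp_all add: field_simps)
  hence t': "t' \<in> {0..<p}" unfolding t'_def by (simp add: algebra_simps)
  have tt: "t = t' + real_of_int n * p" unfolding t'_def by simp
  show ?thesis using that[OF t' tt] .
qed

lemma tanh_ratio:
  fixes a b :: real assumes "a > 0" "b > 0"
  shows "tanh ((ln b - ln a) / 2) = (b - a) / (b + a)"
proof -
  have "exp (- 2 * ((ln b - ln a) / 2)) = exp (ln a - ln b)" by (rule arg_cong[where f=exp]) simp
  also have "\<dots> = a / b" using assms by (simp add: exp_diff)
  finally have E: "exp (- 2 * ((ln b - ln a) / 2)) = a / b" .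
  have "1 - a/b = (b-a)/b" "1 + a/b = (b+a)/b" using assms by (simp_all add: field_simps)
  thus ?thesis unfolding tanh_real_altdef E using assms by simp
qed

context lvs begin

definition "inS u v \<longleftrightarrow> lv_solution \<alpha> \<beta> u v \<and> coexistence_state u v \<and> periodic_pair (2*T) u v"

lemma Fa_3h: "Fa (3*T/2) - Fa T = A"
  using Fa_shift[of "T/2"] Fa_half by (simp add: field_simps)
lemma Fa_h0: "Fa (T/2) - Fa 0 = A" using Fa_half by (simp add: A_def)
lemma Fb_1h: "Fb T - Fb (T/2) = B" using Fb_half by (simp add: B_def)
lemma Fb_2h: "Fb (2*T) - Fb (3*T/2) = B"
  using Fb_shift[of "T"] Fb_shift[of "T/2"] Fb_half by (simp add: field_simps B_def)

lemma I1: "t \<in> {0..T/2} \<Longrightarrow> \<beta> t = 0" using zb by blast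
lemma I2: "t \<in> {T/2..T} \<Longrightarrow> \<alpha> t = 0" using za by blast
lemma I3: "t \<in> {T..3*T/2} \<Longrightarrow> \<beta> t = 0" using zb2 by blast
lemma I4: "t \<in> {3*T/2..2*T} \<Longrightarrow> \<alpha> t = 0" using za2 by blast

lemma inS_D:
  assumes "inS u v"
  shows "lv_solution \<alpha> \<beta> u v" "\<And>t. u t > 0 \<and> v t > 0" "\<And>t. u (t + 2*T) = u t" "\<And>t. v (t + 2*T) = v t"
  using assms unfolding inS_def coexistence_state_def periodic_pair_def by auto

lemma uniq:
  assumes S1: "inS u1 v1" and S2: "inS u2 v2" and e: "u1 0 = u2 0" "v1 0 = v2 0"
  shows "u1 = u2 \<and> v1 = v2"
proof -
  note d1 = inS_D[OF S1] and d2 = inS_D[OF S2]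
  have T0: "T > 0" using T .
  have a1: "u1 t = u2 t \<and> v1 t = v2 t" if "t \<in> {0..T/2}" for t
    by (rule agree_b0[where p=0 and q="T/2", OF d1(1,2) d2(1,2) I1 Fa e that])
  have e1: "u1 (T/2) = u2 (T/2)" "v1 (T/2) = v2 (T/2)" using a1[of "T/2"] T0 by auto
  have a2: "u1 t = u2 t \<and> v1 t = v2 t" if "t \<in> {T/2..T}" for t
    by (rule agree_a0[where p="T/2" and q=T, OF d1(1,2) d2(1,2) I2 Fb e1 that])
  have e2: "u1 T = u2 T" "v1 T = v2 T" using a2[of T] T0 by auto
  have a3: "u1 t = u2 t \<and> v1 t = v2 t" if "t \<in> {T..3*T/2}" for t
    by (rule agree_b0[where p=T and q="3*T/2", OF d1(1,2) d2(1,2) I3 Fa e2 that])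
  have e3: "u1 (3*T/2) = u2 (3*T/2)" "v1 (3*T/2) = v2 (3*T/2)" using a3[of "3*T/2"] T0 by auto
  have a4: "u1 t = u2 t \<and> v1 t = v2 t" if "t \<in> {3*T/2..2*T}" for t
    by (rule agree_a0[where p="3*T/2" and q="2*T", OF d1(1,2) d2(1,2) I4 Fb e3 that])
  have all: "u1 t = u2 t \<and> v1 t = v2 t" if "t \<in> {0..<2*T}" for t
  proof -
    have "t \<in> {0..T/2} \<or> t \<in> {T/2..T} \<or> t \<in> {T..3*T/2} \<or> t \<in> {3*T/2..2*T}"
      using that unfolding atLeastAtMost_iff atLeastLessThan_iff by linarith
    thus ?thesis using a1 a2 a3 a4 by blast
  qed
  have "u1 t = u2 t \<and> v1 t = v2 t" for t
  proof -
    have p2: "2 * T > 0" using T0 by simp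
    obtain t' n where t': "t' \<in> {0..<2*T}" "t = t' + real_of_int n * (2*T)"
      using periodic_reduce[OF p2] by blast
    have "u1 t = u1 t'" "u2 t = u2 t'" "v1 t = v1 t'" "v2 t = v2 t'"
      unfolding t'(2) by (rule periodic_int, rule d1(3) d2(3) d1(4) d2(4))+
    thus ?thesis using all[OF t'(1)] by simp
  qed
  thus ?thesis by auto
qed

lemma sol_params:
  assumes S: "inS u v"
  shows "\<exists>\<sigma> \<rho>. sysE A B \<sigma> \<rho> \<and> u 0 = 1 - tanh \<sigma> \<and> v 0 = 1 - tanh \<rho>"
proof -
  note d = inS_D[OF S]
  have T0: "T > 0" using T .
  have h1: "v (T/2) = v 0 \<and> ln (u (T/2)) = ln (u 0) + (1 - v 0) * (Fa (T/2) - Fa 0)"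
    by (rule half_step_beta0[where p=0 and q="T/2", OF d(1,2) I1 Fa]) (use T0 in auto)
  have h2: "u T = u (T/2) \<and> ln (v T) = ln (v (T/2)) + (u (T/2) - 1) * (Fb T - Fb (T/2))"
    by (rule half_step_alpha0[where p="T/2" and q=T, OF d(1,2) I2 Fb]) (use T0 in auto)
  have h3: "v (3*T/2) = v T \<and> ln (u (3*T/2)) = ln (u T) + (1 - v T) * (Fa (3*T/2) - Fa T)"
    by (rule half_step_beta0[where p=T and q="3*T/2", OF d(1,2) I3 Fa]) (use T0 in auto)
  have h4: "u (2*T) = u (3*T/2) \<and> ln (v (2*T)) = ln (v (3*T/2)) + (u (3*T/2) - 1) * (Fb (2*T) - Fb (3*T/2))"
    by (rule half_step_alpha0[where p="3*T/2" and q="2*T", OF d(1,2) I4 Fb]) (use T0 in auto)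
  define a b c dd where "a = u 0" "b = u T" "c = v 0" "dd = v T"
  have pa': "u (2*T) = a" "v (2*T) = c" using d(3)[of 0] d(4)[of 0] by (simp_all add: a_b_c_dd_def)
  have ps: "a > 0" "b > 0" "c > 0" "dd > 0" using d(2) by (auto simp: a_b_c_dd_def)
  have uh: "u (T/2) = b" using h2 by (simp add: a_b_c_dd_def)
  have u3: "u (3*T/2) = a" using h4 pa' by simp
  have v3: "v (3*T/2) = dd" using h3 by (simp add: a_b_c_dd_def)
  have vh: "v (T/2) = c" using h1 by (simp add: a_b_c_dd_def)
  have e1: "ln b = ln a + (1 - c) * A" using h1 uh Fa_h0 by (simp add: a_b_c_dd_def)
  have e2: "ln dd = ln c + (b - 1) * B" using h2 uh vh Fb_1h by (simp add: a_b_c_dd_def)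
  have e3: "ln a = ln b + (1 - dd) * A" using h3 u3 Fa_3h by (simp add: a_b_c_dd_def)
  have e4: "ln c = ln dd + (a - 1) * B" using h4 u3 v3 pa' Fb_2h by simp
  have "(2 - c - dd) * A = 0" using e1 e3 by (simp add: algebra_simps)
  hence cd: "c + dd = 2" using A_pos by simp
  have "(a + b - 2) * B = 0" using e2 e4 by (simp add: algebra_simps)
  hence ab: "a + b = 2" using B_pos by simp
  define \<sigma> \<rho> where "\<sigma> = (ln b - ln a) / 2" "\<rho> = (ln dd - ln c) / 2"
  have "tanh \<sigma> = (b - a) / (b + a)" unfolding \<sigma>_\<rho>_def by (rule tanh_ratio) (use ps in auto)
  also have "\<dots> = 1 - a" using ab by (simp add: field_simps)
  finally have ts: "tanh \<sigma> = 1 - a" .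
  have "tanh \<rho> = (dd - c) / (dd + c)" unfolding \<sigma>_\<rho>_def by (rule tanh_ratio) (use ps in auto)
  also have "\<dots> = 1 - c" using cd by (simp add: field_simps)
  finally have tr: "tanh \<rho> = 1 - c" .
  have "2 * \<sigma> = (1 - c) * A" unfolding \<sigma>_\<rho>_def using e1 by simp
  hence s1: "2 * \<sigma> = A * tanh \<rho>" using tr by simp
  have "2 * \<rho> = (b - 1) * B" unfolding \<sigma>_\<rho>_def using e2 by simp
  moreover have "b - 1 = tanh \<sigma>" using ts ab by simp
  ultimately have s2: "2 * \<rho> = B * tanh \<sigma>" by simp
  have "sysE A B \<sigma> \<rho>" unfolding sysE_def using s1 s2 by blast
  moreover have "u 0 = 1 - tanh \<sigma>" "v 0 = 1 - tanh \<rho>" using ts tr a_b_c_dd_def by simp_all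
  ultimately show ?thesis by blast
qed

end

definition antid :: "(real \<Rightarrow> real) \<Rightarrow> real \<Rightarrow> real" where
  "antid f = (SOME F. \<forall>x. (F has_real_derivative f x) (at x))"

lemma antid: assumes "continuous_on UNIV f" shows "(antid f has_real_derivative f x) (at x)"
proof -
  obtain F where "\<And>x. (F has_real_derivative f x) (at x)" using antideriv_UNIV[OF assms] by blast
  hence "\<exists>F. \<forall>x. (F has_real_derivative f x) (at x)" by blast
  from someI_ex[OF this] show ?thesis unfolding antid_def by blast
qed

lemma diff_const:
  assumes "\<And>x. (G has_real_derivative g x) (at x)" "\<And>x. (F has_real_derivative f x) (at x)"
    and "\<And>x. x \<in> {p..q} \<Longrightarrow> g x = k * f x" and "t \<in> {p..q}"
  shows "G t - k * F t = G p - k * F p"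
proof -
  have "\<And>x. p \<le> x \<Longrightarrow> x \<le> q \<Longrightarrow> ((\<lambda>x. G x - k * F x) has_real_derivative 0) (at x)"
  proof -
    fix x assume "p \<le> x" "x \<le> q"
    hence "g x - k * f x = 0" using assms(3) by simp
    moreover have "((\<lambda>x. G x - k * F x) has_real_derivative g x - k * f x) (at x)"
      by (rule DERIV_diff[OF assms(1) DERIV_cmult[OF assms(2)]])
    ultimately show "((\<lambda>x. G x - k * F x) has_real_derivative 0) (at x)" by simp
  qed
  from const_on_interval[OF this assms(4)] show ?thesis .
qed

lemma cos_ge_half: fixes x :: real assumes "\<bar>x\<bar> \<le> pi / 4" shows "cos x \<ge> 1/2"
proof -
  have "cos (pi/3) \<le> cos \<bar>x\<bar>" by (rule cos_monotone_0_pi_le) (use assms pi_gt_zero in auto)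
  thus ?thesis by (simp add: cos_60)
qed

lemma ln_tanh: fixes x :: real shows "ln (1 + tanh x) - ln (1 - tanh x) = 2 * x"
proof -
  have b: "tanh x \<in> {-1<..<1}" by (rule tanh_real_bounds)
  hence p: "1 - tanh x > 0" "1 + tanh x > 0" by auto
  have "tanh ((ln (1 + tanh x) - ln (1 - tanh x)) / 2) = ((1 + tanh x) - (1 - tanh x)) / ((1 + tanh x) + (1 - tanh x))"
    by (rule tanh_ratio) (use p in auto)
  also have "\<dots> = tanh x" by simp
  finally show ?thesis by simp
qed

context lvs begin

definition "phi t = max (-1) (min 1 (2 * cos (pi * (t - T/4) / T)))"
definition "psi t = phi (t - T/2)"

lemma phi_cont: "continuous_on UNIV phi"
  unfolding phi_def using T by (auto intro!: continuous_intros)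
lemma psi_cont: "continuous_on UNIV psi"
  unfolding psi_def phi_def using T by (auto intro!: continuous_intros)

lemma phi_per: "phi (t + 2*T) = phi t"
proof -
  have "pi * (t + 2*T - T/4) / T = pi * (t - T/4) / T + 2 * pi" using T by (simp add: field_simps)
  thus ?thesis unfolding phi_def by simp
qed
lemma psi_per: "psi (t + 2*T) = psi t"
  unfolding psi_def using phi_per[of "t - T/2"] by (simp add: algebra_simps)

lemma phi1: assumes "t \<in> {0..T/2}" shows "phi t = 1"
proof -
  have "\<bar>(t - T/4) / T\<bar> \<le> 1/4" using assms T by (auto simp: abs_le_iff field_simps)
  hence "pi * \<bar>(t - T/4) / T\<bar> \<le> pi * (1/4)" using pi_gt_zero by (intro mult_left_mono) auto
  hence "\<bar>pi * ((t - T/4) / T)\<bar> \<le> pi / 4" by (simp add: abs_mult)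
  hence "\<bar>pi * (t - T/4) / T\<bar> \<le> pi / 4" by simp
  hence "cos (pi * (t - T/4) / T) \<ge> 1/2" by (rule cos_ge_half)
  thus ?thesis unfolding phi_def by simp
qed

end

context lvs begin

lemma phim1: assumes "t \<in> {T..3*T/2}" shows "phi t = -1"
proof -
  have "\<bar>(t - 5*T/4) / T\<bar> \<le> 1/4" using assms T by (auto simp: abs_le_iff field_simps)
  hence "pi * \<bar>(t - 5*T/4) / T\<bar> \<le> pi * (1/4)" using pi_gt_zero by (intro mult_left_mono) auto
  hence "\<bar>pi * ((t - 5*T/4) / T)\<bar> \<le> pi / 4" by (simp add: abs_mult)
  hence "cos (pi * ((t - 5*T/4) / T)) \<ge> 1/2" by (rule cos_ge_half)
  moreover have "pi * ((t - 5*T/4) / T) = pi * (t - T/4) / T - pi" using T by (simp add: field_simps)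
  ultimately have "cos (pi * (t - T/4) / T) \<le> -1/2" by simp
  thus ?thesis unfolding phi_def by simp
qed

lemma psi1: "t \<in> {T/2..T} \<Longrightarrow> psi t = 1" unfolding psi_def by (rule phi1) auto
lemma psim1: "t \<in> {3*T/2..2*T} \<Longrightarrow> psi t = -1" unfolding psi_def by (rule phim1) auto

lemma a_per2: "\<alpha> (t + 2*T) = \<alpha> t" using pa by (metis add.assoc mult_2)
lemma b_per2: "\<beta> (t + 2*T) = \<beta> t" using pb by (metis add.assoc mult_2)

definition "G t = antid (\<lambda>x. \<alpha> x * phi x) t - antid (\<lambda>x. \<alpha> x * phi x) 0"
definition "H t = antid (\<lambda>x. \<beta> x * psi x) t - antid (\<lambda>x. \<beta> x * psi x) 0"

lemma G_der: "(G has_real_derivative \<alpha> x * phi x) (at x)"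
proof -
  have "continuous_on UNIV (\<lambda>x. \<alpha> x * phi x)" using ca phi_cont by (intro continuous_intros)
  from antid[OF this] show ?thesis unfolding G_def by (auto intro!: derivative_eq_intros)
qed
lemma H_der: "(H has_real_derivative \<beta> x * psi x) (at x)"
proof -
  have "continuous_on UNIV (\<lambda>x. \<beta> x * psi x)" using cb psi_cont by (intro continuous_intros)
  from antid[OF this] show ?thesis unfolding H_def by (auto intro!: derivative_eq_intros)
qed

lemma G0: "G 0 = 0" by (simp add: G_def)
lemma H0: "H 0 = 0" by (simp add: H_def)

lemma Gh: "G (T/2) = A"
proof -
  have "G (T/2) - 1 * Fa (T/2) = G 0 - 1 * Fa 0"
    by (rule diff_const[OF G_der Fa, of 0 "T/2"]) (use phi1 T in auto)
  thus ?thesis using G0 Fa_h0 by simp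
qed
lemma G2: "t \<in> {T/2..T} \<Longrightarrow> G t = A"
  using diff_const[OF G_der Fa, of "T/2" T 0 t] za Gh by auto
lemma G3h: "G (3*T/2) = 0"
proof -
  have "G (3*T/2) - (-1) * Fa (3*T/2) = G T - (-1) * Fa T"
    by (rule diff_const[OF G_der Fa, of T "3*T/2"]) (use phim1 T in auto)
  thus ?thesis using G2[of T] Fa_3h T by simp
qed
lemma G4: "t \<in> {3*T/2..2*T} \<Longrightarrow> G t = 0"
  using diff_const[OF G_der Fa, of "3*T/2" "2*T" 0 t] za2 G3h by auto
lemma G_per: "G (t + 2*T) = G t"
proof -
  have "G (t + 2*T) - G t = G (2*T) - G 0"
    by (rule shift_const[OF G_der]) (simp add: a_per2 phi_per)
  thus ?thesis using G4[of "2*T"] G0 T by simp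
qed

lemma H1: "t \<in> {0..T/2} \<Longrightarrow> H t = 0"
  using diff_const[OF H_der Fb, of 0 "T/2" 0 t] zb H0 by auto
lemma HT: "H T = B"
proof -
  have "H T - 1 * Fb T = H (T/2) - 1 * Fb (T/2)"
    by (rule diff_const[OF H_der Fb, of "T/2" T]) (use psi1 T in auto)
  thus ?thesis using H1[of "T/2"] Fb_1h T by simp
qed
lemma H3: "t \<in> {T..3*T/2} \<Longrightarrow> H t = B"
  using diff_const[OF H_der Fb, of T "3*T/2" 0 t] zb2 HT by auto
lemma H2T: "H (2*T) = 0"
proof -
  have "H (2*T) - (-1) * Fb (2*T) = H (3*T/2) - (-1) * Fb (3*T/2)"
    by (rule diff_const[OF H_der Fb, of "3*T/2" "2*T"]) (use psim1 T in auto)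
  thus ?thesis using H3[of "3*T/2"] Fb_2h T by simp
qed
lemma H_per: "H (t + 2*T) = H t"
proof -
  have "H (t + 2*T) - H t = H (2*T) - H 0"
    by (rule shift_const[OF H_der]) (simp add: b_per2 psi_per)
  thus ?thesis using H2T H0 by simp
qed

end

context lvs begin

definition "su \<sigma> \<rho> t = exp (ln (1 - tanh \<sigma>) + tanh \<rho> * G t)"
definition "sv \<sigma> \<rho> t = exp (ln (1 - tanh \<rho>) + tanh \<sigma> * H t)"

lemma tpos: "1 - tanh (x::real) > 0" "1 + tanh x > 0"
  using tanh_real_bounds[of x] by auto

lemma su0: "su \<sigma> \<rho> 0 = 1 - tanh \<sigma>" unfolding su_def G0 using tpos by simp
lemma sv0: "sv \<sigma> \<rho> 0 = 1 - tanh \<rho>" unfolding sv_def H0 using tpos by simp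

lemma su_per: "su \<sigma> \<rho> (t + 2*T) = su \<sigma> \<rho> t" unfolding su_def G_per ..
lemma sv_per: "sv \<sigma> \<rho> (t + 2*T) = sv \<sigma> \<rho> t" unfolding sv_def H_per ..

lemma sv1: "t \<in> {0..T/2} \<Longrightarrow> sv \<sigma> \<rho> t = 1 - tanh \<rho>" unfolding sv_def using H1 tpos by simp
lemma su4: "t \<in> {3*T/2..2*T} \<Longrightarrow> su \<sigma> \<rho> t = 1 - tanh \<sigma>" unfolding su_def using G4 tpos by simp

lemma sv3: assumes "sysE A B \<sigma> \<rho>" "t \<in> {T..3*T/2}" shows "sv \<sigma> \<rho> t = 1 + tanh \<rho>"
proof -
  have "ln (1 - tanh \<rho>) + tanh \<sigma> * H t = ln (1 + tanh \<rho>)"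
    using H3[OF assms(2)] assms(1) ln_tanh[of \<rho>] unfolding sysE_def by (simp add: algebra_simps)
  thus ?thesis unfolding sv_def using tpos by simp
qed
lemma su2: assumes "sysE A B \<sigma> \<rho>" "t \<in> {T/2..T}" shows "su \<sigma> \<rho> t = 1 + tanh \<sigma>"
proof -
  have "ln (1 - tanh \<sigma>) + tanh \<rho> * G t = ln (1 + tanh \<sigma>)"
    using G2[OF assms(2)] assms(1) ln_tanh[of \<sigma>] unfolding sysE_def by (simp add: algebra_simps)
  thus ?thesis unfolding su_def using tpos by simp
qed

lemma reduce2T:
  obtains t' n where "t' \<in> {0..<2*T}" "t = t' + real_of_int n * (2*T)"
proof -
  have p2: "2*T > 0" using T by simp
  show ?thesis using periodic_reduce[OF p2] that by blast
qed

lemma four_cases: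
  assumes "t \<in> {0..<2*T}"
  shows "t \<in> {0..T/2} \<or> t \<in> {T/2..T} \<or> t \<in> {T..3*T/2} \<or> t \<in> {3*T/2..2*T}"
  using assms unfolding atLeastAtMost_iff atLeastLessThan_iff by linarith

lemma claim1: assumes "sysE A B \<sigma> \<rho>"
  shows "\<alpha> t * (tanh \<rho> * phi t) = \<alpha> t * (1 - sv \<sigma> \<rho> t)"
proof -
  obtain t' n where t': "t' \<in> {0..<2*T}" "t = t' + real_of_int n * (2*T)"
    by (rule reduce2T[of t])
  have e: "\<alpha> t = \<alpha> t'" "phi t = phi t'" "sv \<sigma> \<rho> t = sv \<sigma> \<rho> t'"
    unfolding t'(2) by (rule periodic_int, rule a_per2 phi_per sv_per)+
  have "\<alpha> t' * (tanh \<rho> * phi t') = \<alpha> t' * (1 - sv \<sigma> \<rho> t')"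
  using four_cases[OF t'(1)] proof (elim disjE)
    assume "t' \<in> {0..T/2}" thus ?thesis using phi1 sv1 by simp
  next
    assume "t' \<in> {T/2..T}" thus ?thesis using I2 by simp
  next
    assume "t' \<in> {T..3*T/2}" thus ?thesis using phim1 sv3[OF assms] by simp
  next
    assume "t' \<in> {3*T/2..2*T}" thus ?thesis using I4 by simp
  qed
  thus ?thesis using e by simp
qed

lemma claim2: assumes "sysE A B \<sigma> \<rho>"
  shows "\<beta> t * (tanh \<sigma> * psi t) = \<beta> t * (-1 + su \<sigma> \<rho> t)"
proof -
  obtain t' n where t': "t' \<in> {0..<2*T}" "t = t' + real_of_int n * (2*T)"
    by (rule reduce2T[of t])
  have e: "\<beta> t = \<beta> t'" "psi t = psi t'" "su \<sigma> \<rho> t = su \<sigma> \<rho> t'"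
    unfolding t'(2) by (rule periodic_int, rule b_per2 psi_per su_per)+
  have "\<beta> t' * (tanh \<sigma> * psi t') = \<beta> t' * (-1 + su \<sigma> \<rho> t')"
  using four_cases[OF t'(1)] proof (elim disjE)
    assume "t' \<in> {0..T/2}" thus ?thesis using I1 by simp
  next
    assume "t' \<in> {T/2..T}" thus ?thesis using psi1 su2[OF assms] by simp
  next
    assume "t' \<in> {T..3*T/2}" thus ?thesis using I3 by simp
  next
    assume "t' \<in> {3*T/2..2*T}" thus ?thesis using psim1 su4 by simp
  qed
  thus ?thesis using e by simp
qed

lemma s_sol: assumes "sysE A B \<sigma> \<rho>" shows "lv_solution \<alpha> \<beta> (su \<sigma> \<rho>) (sv \<sigma> \<rho>)"
  unfolding lv_solution_def
proof
  fix t
  have du: "(su \<sigma> \<rho> has_real_derivative su \<sigma> \<rho> t * (tanh \<rho> * (\<alpha> t * phi t))) (at t)"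
    unfolding su_def by (auto intro!: derivative_eq_intros G_der)
  have dv: "(sv \<sigma> \<rho> has_real_derivative sv \<sigma> \<rho> t * (tanh \<sigma> * (\<beta> t * psi t))) (at t)"
    unfolding sv_def by (auto intro!: derivative_eq_intros H_der)
  have "su \<sigma> \<rho> t * (tanh \<rho> * (\<alpha> t * phi t)) = su \<sigma> \<rho> t * (\<alpha> t * (tanh \<rho> * phi t))" by simp
  also have "\<dots> = \<alpha> t * su \<sigma> \<rho> t * (1 - sv \<sigma> \<rho> t)" unfolding claim1[OF assms] by simp
  finally have 1: "su \<sigma> \<rho> t * (tanh \<rho> * (\<alpha> t * phi t)) = \<alpha> t * su \<sigma> \<rho> t * (1 - sv \<sigma> \<rho> t)" .
  have "sv \<sigma> \<rho> t * (tanh \<sigma> * (\<beta> t * psi t)) = sv \<sigma> \<rho> t * (\<beta> t * (tanh \<sigma> * psi t))" by simp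
  also have "\<dots> = \<beta> t * sv \<sigma> \<rho> t * (-1 + su \<sigma> \<rho> t)" unfolding claim2[OF assms] by simp
  finally have 2: "sv \<sigma> \<rho> t * (tanh \<sigma> * (\<beta> t * psi t)) = \<beta> t * sv \<sigma> \<rho> t * (-1 + su \<sigma> \<rho> t)" .
  show "(su \<sigma> \<rho> has_real_derivative \<alpha> t * su \<sigma> \<rho> t * (1 - sv \<sigma> \<rho> t)) (at t) \<and>
        (sv \<sigma> \<rho> has_real_derivative \<beta> t * sv \<sigma> \<rho> t * (-1 + su \<sigma> \<rho> t)) (at t)"
    using du dv 1 2 by simp
qed

lemma s_inS: assumes "sysE A B \<sigma> \<rho>" shows "inS (su \<sigma> \<rho>) (sv \<sigma> \<rho>)"
  unfolding inS_def coexistence_state_def periodic_pair_def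
  using s_sol[OF assms] su_per sv_per by (auto simp: su_def sv_def)

end

context lvs begin

lemma minper:
  assumes S: "inS u v" and uT: "u T \<noteq> u 0"
    and v1: "\<And>t. t \<in> {0<..<T/2} \<Longrightarrow> v t \<noteq> 1" and v3: "\<And>t. t \<in> {T<..<3*T/2} \<Longrightarrow> v t \<noteq> 1"
  shows "minimal_period (2*T) u v"
proof -
  note d = inS_D[OF S]
  have T0: "T > 0" using T .
  have "\<not> periodic_pair q u v" if q: "0 < q" "q < 2*T" for q
  proof
    assume pp: "periodic_pair q u v"
    hence up: "\<And>x. u (x + q) = u x" unfolding periodic_pair_def by blast
    define D where "D y = \<alpha> y * u y * (1 - v y)" for y
    have du: "(u has_real_derivative D y) (at y)" for y using d(1) unfolding lv_solution_def D_def by blast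
    have key: "D (t + q) = D t" for t
    proof -
      have "((\<lambda>x. u (x + q)) has_real_derivative D (t + q)) (at t)"
        using du[of "t + q"] DERIV_shift[of u "D (t+q)" t q] by simp
      moreover have "(\<lambda>x. u (x + q)) = u" using up by auto
      ultimately have "(u has_real_derivative D (t + q)) (at t)" by simp
      from DERIV_unique[OF this du[of t]] show ?thesis .
    qed
    have Dne: "D y \<noteq> 0" if "\<alpha> y > 0" "v y \<noteq> 1" for y
      using that d(2)[of y] unfolding D_def by simp
    consider "q = T" | "q < T" | "q > T" by linarith
    thus False
    proof cases
      case 1 thus False using up[of 0] uT by simp
    next
      case 2
      define t where "t = T - q/2"
      have tt: "t \<in> {T/2..T}" using q 2 by (simp add: t_def)
      have Dt: "D t = 0" unfolding D_def using I2[OF tt] by simp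
      have a: "\<alpha> (q/2 + T) = \<alpha> (q/2)" using pa by blast
      have "\<alpha> (q/2) > 0" using posa q 2 by simp
      moreover have "t + q = q/2 + T" by (simp add: t_def)
      ultimately have "\<alpha> (t + q) > 0" using a by simp
      moreover have "v (t + q) \<noteq> 1" using v3[of "t+q"] q 2 by (simp add: t_def)
      ultimately show False using Dne key Dt by metis
    next
      case 3
      define t where "t = (3*T - q)/2"
      define w where "w = (q - T)/2"
      have tt: "t \<in> {T/2..T}" using q 3 by (simp add: t_def)
      have Dt: "D t = 0" unfolding D_def using I2[OF tt] by simp
      have tq: "t + q = w + 2*T" by (simp add: t_def w_def field_simps)
      have w: "w \<in> {0<..<T/2}" using q 3 by (simp add: w_def)
      have "\<alpha> (t + q) > 0" unfolding tq a_per2 using posa w by blast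
      moreover have "v (t + q) \<noteq> 1" unfolding tq d(4) using v1[OF w] .
      ultimately show False using Dne key Dt by metis
    qed
  qed
  thus ?thesis unfolding minimal_period_def periodic_pair_def using d T0 by auto
qed

lemma s_good:
  assumes sy: "sysE A B \<sigma> \<rho>" and s0: "\<sigma> \<noteq> 0" and r0: "\<rho> \<noteq> 0"
  shows "lv_solution \<alpha> \<beta> (su \<sigma> \<rho>) (sv \<sigma> \<rho>) \<and> coexistence_state (su \<sigma> \<rho>) (sv \<sigma> \<rho>) \<and>
         minimal_period (2 * T) (su \<sigma> \<rho>) (sv \<sigma> \<rho>)"
proof -
  have S: "inS (su \<sigma> \<rho>) (sv \<sigma> \<rho>)" by (rule s_inS[OF sy])
  have "minimal_period (2 * T) (su \<sigma> \<rho>) (sv \<sigma> \<rho>)"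
  proof (rule minper[OF S])
    show "su \<sigma> \<rho> T \<noteq> su \<sigma> \<rho> 0" using su2[OF sy, of T] su0 s0 T by simp
    show "sv \<sigma> \<rho> t \<noteq> 1" if "t \<in> {0<..<T/2}" for t using sv1[of t] that r0 by simp
    show "sv \<sigma> \<rho> t \<noteq> 1" if "t \<in> {T<..<3*T/2}" for t using sv3[OF sy, of t] that r0 by simp
  qed
  thus ?thesis using S unfolding inS_def by simp
qed

lemma const_inS: "inS (\<lambda>_. 1) (\<lambda>_. 1)"
  unfolding inS_def lv_solution_def coexistence_state_def periodic_pair_def
  by simp

lemma main: "card {(u, v). lv_solution \<alpha> \<beta> u v \<and> coexistence_state u v \<and>
                       minimal_period (2 * T) u v} = 2"
proof -
  obtain \<sigma>0 \<rho>0 where c: "\<sigma>0 > 0" "\<rho>0 > 0" "sysE A B \<sigma>0 \<rho>0"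
    "\<And>\<sigma> \<rho>. sysE A B \<sigma> \<rho> \<Longrightarrow> \<sigma> \<noteq> 0 \<Longrightarrow> (\<sigma> = \<sigma>0 \<and> \<rho> = \<rho>0) \<or> (\<sigma> = -\<sigma>0 \<and> \<rho> = -\<rho>0)"
    using sysE_classify[OF A_pos B_pos AB4] by blast
  have c2: "sysE A B (-\<sigma>0) (-\<rho>0)" using sysE_neg[OF c(3)] .
  define p1 where "p1 = (su \<sigma>0 \<rho>0, sv \<sigma>0 \<rho>0)"
  define p2 where "p2 = (su (-\<sigma>0) (-\<rho>0), sv (-\<sigma>0) (-\<rho>0))"
  let ?S = "{(u, v). lv_solution \<alpha> \<beta> u v \<and> coexistence_state u v \<and> minimal_period (2 * T) u v}"
  have "p1 \<in> ?S" unfolding p1_def using s_good[OF c(3)] c(1,2) by simp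
  moreover have "p2 \<in> ?S" unfolding p2_def using s_good[OF c2] c(1,2) by simp
  moreover have "x \<in> {p1, p2}" if x: "x \<in> ?S" for x
  proof -
    obtain u v where x': "x = (u, v)" by (cases x)
    have sol: "lv_solution \<alpha> \<beta> u v" "coexistence_state u v" "minimal_period (2 * T) u v"
      using x unfolding x' by auto
    have S: "inS u v" using sol unfolding inS_def minimal_period_def by blast
    obtain \<sigma> \<rho> where sp: "sysE A B \<sigma> \<rho>" "u 0 = 1 - tanh \<sigma>" "v 0 = 1 - tanh \<rho>"
      using sol_params[OF S] by blast
    have "\<sigma> \<noteq> 0"
    proof
      assume "\<sigma> = 0"
      hence "\<rho> = 0" using sp(1) unfolding sysE_def by simp
      with \<open>\<sigma> = 0\<close> have "u 0 = 1" "v 0 = 1" using sp by auto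
      hence "u = (\<lambda>_. 1) \<and> v = (\<lambda>_. 1)" using uniq[OF S const_inS] by simp
      hence "periodic_pair T u v" unfolding periodic_pair_def by simp
      moreover have "0 < T" "T < 2 * T" using T by auto
      ultimately show False using sol(3) unfolding minimal_period_def by blast
    qed
    from c(4)[OF sp(1) this] have "(\<sigma> = \<sigma>0 \<and> \<rho> = \<rho>0) \<or> (\<sigma> = -\<sigma>0 \<and> \<rho> = -\<rho>0)" .
    thus ?thesis
    proof
      assume e: "\<sigma> = \<sigma>0 \<and> \<rho> = \<rho>0"
      have "u = su \<sigma>0 \<rho>0 \<and> v = sv \<sigma>0 \<rho>0"
        by (rule uniq[OF S s_inS[OF c(3)]]) (use sp e su0 sv0 in auto)
      thus ?thesis unfolding x' p1_def by simp
    next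
      assume e: "\<sigma> = -\<sigma>0 \<and> \<rho> = -\<rho>0"
      have "u = su (-\<sigma>0) (-\<rho>0) \<and> v = sv (-\<sigma>0) (-\<rho>0)"
        by (rule uniq[OF S s_inS[OF c2]]) (use sp e su0 sv0 in auto)
      thus ?thesis unfolding x' p2_def by simp
    qed
  qed
  ultimately have eq: "?S = {p1, p2}" by blast
  have "fst p1 0 \<noteq> fst p2 0" unfolding p1_def p2_def using su0 c(1) by simp
  hence "p1 \<noteq> p2" by auto
  thus ?thesis unfolding eq by simp
qed

end

theorem theorem2p1:
  fixes T :: real and \<alpha> \<beta> :: "real \<Rightarrow> real"
  assumes "T > 0"
    and "continuous_on UNIV \<alpha>" and "continuous_on UNIV \<beta>"
    and "\<forall>t. \<alpha> (t + T) = \<alpha> t" and "\<forall>t. \<beta> (t + T) = \<beta> t"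
    and "\<forall>t\<in>{T/2..T}. \<alpha> t = 0" and "\<forall>t\<in>{0..T/2}. \<beta> t = 0"
    and "\<forall>t\<in>{0<..<T/2}. \<alpha> t > 0" and "\<forall>t\<in>{T/2<..<T}. \<beta> t > 0"
    and "integral {0..T} \<alpha> * integral {0..T} \<beta> > 4"
  shows "card {(u, v). lv_solution \<alpha> \<beta> u v \<and> coexistence_state u v \<and>
                       minimal_period (2 * T) u v} = 2"
proof -
  interpret lvs T \<alpha> \<beta> using assms by unfold_locales
  show ?thesis by (rule main)
qed

end
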